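(* Let $\widetilde{\Sigma}_1,\ldots,\widetilde{\Sigma}_n$ be pairwise disjoint visibly pushdown alphabets and $P_k\subseteq\widetilde{\Sigma}_k^*$ well-matched visibly pushdown languages, each equipped with a semantics $\mathcal{F}_k$ as described in the context, and let $\mathcal{M}$ (the $n$-stack semantics) and $\mathcal{S}$ (the single-stack semantics) be defined from them as in the context. Then for every word $\rho\in P_1\bowtie\cdots\bowtie P_n$ and all assertions $A,B$ over the valuations in $V$, the Hoare triple $\{A\}\rho\{B\}$ is valid with respect to $\mathcal{M}$ if and only if it is valid with respect to $\mathcal{S}$.
   Context: A visibly pushdown (VP) alphabet is a finite alphabet partitioned into calls, returns and internals; $\Sigma^{\mathsf{call}}_k,\Sigma^{\mathsf{ret}}_k,\Sigma^{\mathsf{int}}_k$ are those of $\widetilde{\Sigma}_k$, and $\widetilde{\Sigma}=\biguplus_k\widetilde{\Sigma}_k$. Calls and returns are matched like parentheses (internals ignored); well-matched = all matched. Shuffle $P_1\parallel\cdots\parallel P_n=\{w\in\widetilde{\Sigma}^*:\Pi_{\widetilde{\Sigma}_k}(w)\in P_k\ \forall k\}$; a word is well-nested if every matched call–return pair consists of letters from the same $\widetilde{\Sigma}_k$; $P_1\bowtie\cdots\bowtie P_n$ is the set of well-nested words of the shuffle. Program $k$ has its own variables (disjoint across programs); $V_k$ is its set of valuations, and $V$ is the set of valuations of all variables, identified with tuples $\nu=(\nu|_1,\ldots,\nu|_n)$, $\nu|_j\in V_j$. A stack is a nonempty finite sequence of frames; $S.\nu$ denotes a stack with top frame $\nu$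 and rest $S$. Semantics $\mathcal{F}_k$: for $c\in\Sigma^{\mathsf{call}}_k$, $\mathcal{F}_k(c):V_k\to 2^{V_k}$; for $r\in\Sigma^{\mathsf{ret}}_k$, $\mathcal{F}_k(r):V_k\times V_k\to 2^{V_k}$; for $a\in\Sigma^{\mathsf{int}}_k$, $\mathcal{F}_k(a):V_k\to 2^{V_k}$. $n$-stack semantics: for $x\in\widetilde{\Sigma}_k$, $\mathcal{M}(x)$ relates tuples $(S_1,\ldots,S_n)$ of stacks ($S_j$ over $V_j$) leaving components $j\ne k$ unchanged and changing the $k$-th as: call $x$: $S.\nu\mapsto S.\nu.\nu'$ with $\nu'\in\mathcal{F}_k(x)(\nu)$; return $x$: $S.\nu_<.\nu\mapsto S.\nu'$ with $\nu'\in\mathcal{F}_k(x)(\nu,\nu_<)$; internal $x$: $S.\nu\mapsto S.\nu'$ with $\nu'\in\mathcal{F}_k(x)(\nu)$. Single-stack semantics on stacks over $V$: for $x\in\widetilde{\Sigma}_k$, call: $S.\nu\mapsto S.\nu.\nu'$ with $\nu'|_k\in\mathcal{F}_k(x)(\nu|_k)$, $\nu'|_j=\nu|_j$ ($j\ne k$); return: $S.\nu_<.\nu\mapsto S.\nu'$ with $\nu'|_k\in\mathcal{F}_k(x)(\nu|_k,\nu_<|_k)$, $\nu'|_j=\nu|_j$ ($j\ne k$); internal: $S.\nu\mapsto S.\nu'$ with $\nu'|_k\in\mathcal{F}_k(x)(\nu|_k)$, $\nu'|_j=\nu|_j$ ($j\ne k$). Both are extended to words by relational composition. $\{A\}\rho\{B\}$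 is valid w.r.t. $\mathcal{M}$ if for all $((S_1.\nu_1,\ldots,S_n.\nu_n),(S_1'.\nu_1',\ldots,S_n'.\nu_n'))\in\mathcal{M}(\rho)$, $(\nu_1,\ldots,\nu_n)\models A$ implies $(\nu'_1,\ldots,\nu'_n)\models B$; valid w.r.t. $\mathcal{S}$ if for all $(S.\nu,S'.\nu')\in\mathcal{S}(\rho)$, $\nu\models A$ implies $\nu'\models B$. *)

theory Defs
  imports Main
begin

text \<open>Programs are indexed by k < n (0-based). The VP alphabet of program k is
  Sig Cal Ret Itn k = Cal k \<union> Ret k \<union> Itn k (calls, returns, internals).\<close>

definition Sig :: "(nat \<Rightarrow> 'a set) \<Rightarrow> (nat \<Rightarrow> 'a set) \<Rightarrow> (nat \<Rightarrow> 'a set) \<Rightarrow> nat \<Rightarrow> 'a set" where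
  "Sig Cal Ret Itn k = Cal k \<union> Ret k \<union> Itn k"

definition vp_alphabets :: "nat \<Rightarrow> (nat \<Rightarrow> 'a set) \<Rightarrow> (nat \<Rightarrow> 'a set) \<Rightarrow> (nat \<Rightarrow> 'a set) \<Rightarrow> bool" where
  "vp_alphabets n Cal Ret Itn \<longleftrightarrow>
     (\<forall>k<n. finite (Sig Cal Ret Itn k)
        \<and> Cal k \<inter> Ret k = {} \<and> Cal k \<inter> Itn k = {} \<and> Ret k \<inter> Itn k = {})
   \<and> (\<forall>k<n. \<forall>j<n. k \<noteq> j \<longrightarrow> Sig Cal Ret Itn k \<inter> Sig Cal Ret Itn j = {})"

inductive wm :: "'a set \<Rightarrow> 'a set \<Rightarrow> 'a set \<Rightarrow> 'a list \<Rightarrow> bool" for Cs Rs Is where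
  wm_Nil: "wm Cs Rs Is []"
| wm_int: "a \<in> Is \<Longrightarrow> wm Cs Rs Is [a]"
| wm_nest: "c \<in> Cs \<Longrightarrow> r \<in> Rs \<Longrightarrow> wm Cs Rs Is u \<Longrightarrow> wm Cs Rs Is (c # u @ [r])"
| wm_app: "wm Cs Rs Is u \<Longrightarrow> wm Cs Rs Is v \<Longrightarrow> wm Cs Rs Is (u @ v)"

definition matched :: "'a set \<Rightarrow> 'a set \<Rightarrow> 'a set \<Rightarrow> 'a list \<Rightarrow> nat \<Rightarrow> nat \<Rightarrow> bool" where
  "matched Cs Rs Is w i j \<longleftrightarrow> i < j \<and> j < length w \<and> w ! i \<in> Cs \<and> w ! j \<in> Rs
     \<and> wm Cs Rs Is (take (j - i - 1) (drop (i + 1) w))"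

text \<open>Visibly pushdown automata (Alur--Madhusudan): states and stack symbols are
  drawn from finite sets of naturals; a return on the empty stack reads the bottom
  symbol (None) and leaves the stack empty.\<close>
inductive vpa_run :: "'a set \<Rightarrow> 'a set \<Rightarrow> 'a set
    \<Rightarrow> (nat \<times> 'a \<times> nat \<times> nat) set \<Rightarrow> (nat \<times> 'a \<times> nat option \<times> nat) set
    \<Rightarrow> (nat \<times> 'a \<times> nat) set
    \<Rightarrow> nat \<Rightarrow> nat list \<Rightarrow> 'a list \<Rightarrow> nat \<Rightarrow> nat list \<Rightarrow> bool"
  for Cs Rs Is dc dr di where
  run_Nil: "vpa_run Cs Rs Is dc dr di q st [] q st"
| run_call: "x \<in> Cs \<Longrightarrow> (q, x, q', g) \<in> dc \<Longrightarrow> vpa_run Cs Rs Is dc dr di q' (g # st) w q'' st''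
     \<Longrightarrow> vpa_run Cs Rs Is dc dr di q st (x # w) q'' st''"
| run_ret: "x \<in> Rs \<Longrightarrow> (q, x, Some g, q') \<in> dr \<Longrightarrow> vpa_run Cs Rs Is dc dr di q' st w q'' st''
     \<Longrightarrow> vpa_run Cs Rs Is dc dr di q (g # st) (x # w) q'' st''"
| run_ret_bot: "x \<in> Rs \<Longrightarrow> (q, x, None, q') \<in> dr \<Longrightarrow> vpa_run Cs Rs Is dc dr di q' [] w q'' st''
     \<Longrightarrow> vpa_run Cs Rs Is dc dr di q [] (x # w) q'' st''"
| run_int: "x \<in> Is \<Longrightarrow> (q, x, q') \<in> di \<Longrightarrow> vpa_run Cs Rs Is dc dr di q' st w q'' st''
     \<Longrightarrow> vpa_run Cs Rs Is dc dr di q st (x # w) q'' st''"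

definition is_vpl :: "'a set \<Rightarrow> 'a set \<Rightarrow> 'a set \<Rightarrow> 'a list set \<Rightarrow> bool" where
  "is_vpl Cs Rs Is L \<longleftrightarrow>
    (\<exists>(Q::nat set) (Gam::nat set) Q0 Fin dc dr di.
       finite Q \<and> finite Gam \<and> Q0 \<subseteq> Q \<and> Fin \<subseteq> Q
     \<and> dc \<subseteq> Q \<times> Cs \<times> Q \<times> Gam
     \<and> dr \<subseteq> Q \<times> Rs \<times> (Some ` Gam \<union> {None}) \<times> Q
     \<and> di \<subseteq> Q \<times> Is \<times> Q
     \<and> L = {w. set w \<subseteq> Cs \<union> Rs \<union> Is \<and>
              (\<exists>q0\<in>Q0. \<exists>q st. vpa_run Cs Rs Is dc dr di q0 [] w q st \<and> q \<in> Fin)})"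

definition wm_vpl :: "'a set \<Rightarrow> 'a set \<Rightarrow> 'a set \<Rightarrow> 'a list set \<Rightarrow> bool" where
  "wm_vpl Cs Rs Is L \<longleftrightarrow> is_vpl Cs Rs Is L \<and> (\<forall>w\<in>L. wm Cs Rs Is w)"

definition shuffle :: "nat \<Rightarrow> (nat \<Rightarrow> 'a set) \<Rightarrow> (nat \<Rightarrow> 'a set) \<Rightarrow> (nat \<Rightarrow> 'a set)
    \<Rightarrow> (nat \<Rightarrow> 'a list set) \<Rightarrow> 'a list set" where
  "shuffle n Cal Ret Itn P = {w. set w \<subseteq> (\<Union>k<n. Sig Cal Ret Itn k)
      \<and> (\<forall>k<n. filter (\<lambda>x. x \<in> Sig Cal Ret Itn k) w \<in> P k)}"

definition well_nested :: "nat \<Rightarrow> (nat \<Rightarrow> 'a set) \<Rightarrow> (nat \<Rightarrow> 'a set) \<Rightarrow> (nat \<Rightarrow> 'a set)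
    \<Rightarrow> 'a list \<Rightarrow> bool" where
  "well_nested n Cal Ret Itn w \<longleftrightarrow>
     (\<forall>i j. matched (\<Union>k<n. Cal k) (\<Union>k<n. Ret k) (\<Union>k<n. Itn k) w i j \<longrightarrow>
        (\<exists>k<n. w ! i \<in> Sig Cal Ret Itn k \<and> w ! j \<in> Sig Cal Ret Itn k))"

definition bowtie :: "nat \<Rightarrow> (nat \<Rightarrow> 'a set) \<Rightarrow> (nat \<Rightarrow> 'a set) \<Rightarrow> (nat \<Rightarrow> 'a set)
    \<Rightarrow> (nat \<Rightarrow> 'a list set) \<Rightarrow> 'a list set" where
  "bowtie n Cal Ret Itn P = {w \<in> shuffle n Cal Ret Itn P. well_nested n Cal Ret Itn w}"

text \<open>Semantics:
  Fc k c : V_k \<rightarrow> 2^V_k (calls), Fr k r \<nu> \<nu>< : V_k \<times> V_k \<rightarrow> 2^V_k (returns, \<nu> = top frame,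
  \<nu>< = frame below), Fi k a : V_k \<rightarrow> 2^V_k (internals).
  Stacks are nonempty lists with the top frame LAST (S.\<nu> = S @ [\<nu>]).\<close>

definition sem_ok :: "nat \<Rightarrow> (nat \<Rightarrow> 'a set) \<Rightarrow> (nat \<Rightarrow> 'a set) \<Rightarrow> (nat \<Rightarrow> 'a set) \<Rightarrow> (nat \<Rightarrow> 'v set)
    \<Rightarrow> (nat \<Rightarrow> 'a \<Rightarrow> 'v \<Rightarrow> 'v set) \<Rightarrow> (nat \<Rightarrow> 'a \<Rightarrow> 'v \<Rightarrow> 'v \<Rightarrow> 'v set) \<Rightarrow> (nat \<Rightarrow> 'a \<Rightarrow> 'v \<Rightarrow> 'v set) \<Rightarrow> bool" where
  "sem_ok n Cal Ret Itn V Fc Fr Fi \<longleftrightarrow> (\<forall>k<n.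
     (\<forall>c\<in>Cal k. \<forall>\<nu>\<in>V k. Fc k c \<nu> \<subseteq> V k)
   \<and> (\<forall>r\<in>Ret k. \<forall>\<nu>\<in>V k. \<forall>\<nu>'\<in>V k. Fr k r \<nu> \<nu>' \<subseteq> V k)
   \<and> (\<forall>a\<in>Itn k. \<forall>\<nu>\<in>V k. Fi k a \<nu> \<subseteq> V k))"

definition gval :: "nat \<Rightarrow> (nat \<Rightarrow> 'v set) \<Rightarrow> 'v list set" where
  "gval n V = {\<nu>. length \<nu> = n \<and> (\<forall>j<n. \<nu> ! j \<in> V j)}"

definition mconf :: "nat \<Rightarrow> (nat \<Rightarrow> 'v set) \<Rightarrow> 'v list list set" where
  "mconf n V = {cfg. length cfg = n \<and> (\<forall>j<n. cfg ! j \<noteq> [] \<and> set (cfg ! j) \<subseteq> V j)}"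

definition Mstep :: "nat \<Rightarrow> (nat \<Rightarrow> 'a set) \<Rightarrow> (nat \<Rightarrow> 'a set) \<Rightarrow> (nat \<Rightarrow> 'a set) \<Rightarrow> (nat \<Rightarrow> 'v set)
    \<Rightarrow> (nat \<Rightarrow> 'a \<Rightarrow> 'v \<Rightarrow> 'v set) \<Rightarrow> (nat \<Rightarrow> 'a \<Rightarrow> 'v \<Rightarrow> 'v \<Rightarrow> 'v set) \<Rightarrow> (nat \<Rightarrow> 'a \<Rightarrow> 'v \<Rightarrow> 'v set)
    \<Rightarrow> 'a \<Rightarrow> ('v list list \<times> 'v list list) set" where
  "Mstep n Cal Ret Itn V Fc Fr Fi x = {(cfg, cfg'). cfg \<in> mconf n V \<and> (\<exists>k<n.
      (x \<in> Cal k \<and> (\<exists>S \<nu> \<nu>'. cfg ! k = S @ [\<nu>] \<and> \<nu>' \<in> Fc k x \<nu> \<and> cfg' = cfg[k := S @ [\<nu>, \<nu>']]))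
    \<or> (x \<in> Ret k \<and> (\<exists>S \<nu>0 \<nu> \<nu>'. cfg ! k = S @ [\<nu>0, \<nu>] \<and> \<nu>' \<in> Fr k x \<nu> \<nu>0 \<and> cfg' = cfg[k := S @ [\<nu>']]))
    \<or> (x \<in> Itn k \<and> (\<exists>S \<nu> \<nu>'. cfg ! k = S @ [\<nu>] \<and> \<nu>' \<in> Fi k x \<nu> \<and> cfg' = cfg[k := S @ [\<nu>']])))}"

fun Msem :: "nat \<Rightarrow> (nat \<Rightarrow> 'a set) \<Rightarrow> (nat \<Rightarrow> 'a set) \<Rightarrow> (nat \<Rightarrow> 'a set) \<Rightarrow> (nat \<Rightarrow> 'v set)
    \<Rightarrow> (nat \<Rightarrow> 'a \<Rightarrow> 'v \<Rightarrow> 'v set) \<Rightarrow> (nat \<Rightarrow> 'a \<Rightarrow> 'v \<Rightarrow> 'v \<Rightarrow> 'v set) \<Rightarrow> (nat \<Rightarrow> 'a \<Rightarrow> 'v \<Rightarrow> 'v set)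
    \<Rightarrow> 'a list \<Rightarrow> ('v list list \<times> 'v list list) set" where
  "Msem n Cal Ret Itn V Fc Fr Fi [] = Id_on (mconf n V)"
| "Msem n Cal Ret Itn V Fc Fr Fi (x # w) =
     Mstep n Cal Ret Itn V Fc Fr Fi x O Msem n Cal Ret Itn V Fc Fr Fi w"

definition sconf :: "nat \<Rightarrow> (nat \<Rightarrow> 'v set) \<Rightarrow> 'v list list set" where
  "sconf n V = {S. S \<noteq> [] \<and> set S \<subseteq> gval n V}"

definition Sstep :: "nat \<Rightarrow> (nat \<Rightarrow> 'a set) \<Rightarrow> (nat \<Rightarrow> 'a set) \<Rightarrow> (nat \<Rightarrow> 'a set) \<Rightarrow> (nat \<Rightarrow> 'v set)
    \<Rightarrow> (nat \<Rightarrow> 'a \<Rightarrow> 'v \<Rightarrow> 'v set) \<Rightarrow> (nat \<Rightarrow> 'a \<Rightarrow> 'v \<Rightarrow> 'v \<Rightarrow> 'v set) \<Rightarrow> (nat \<Rightarrow> 'a \<Rightarrow> 'v \<Rightarrow> 'v set)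
    \<Rightarrow> 'a \<Rightarrow> ('v list list \<times> 'v list list) set" where
  "Sstep n Cal Ret Itn V Fc Fr Fi x = {(st, st'). st \<in> sconf n V \<and> (\<exists>k<n.
      (x \<in> Cal k \<and> (\<exists>S \<nu> u. st = S @ [\<nu>] \<and> u \<in> Fc k x (\<nu> ! k) \<and> st' = S @ [\<nu>, \<nu>[k := u]]))
    \<or> (x \<in> Ret k \<and> (\<exists>S \<nu>0 \<nu> u. st = S @ [\<nu>0, \<nu>] \<and> u \<in> Fr k x (\<nu> ! k) (\<nu>0 ! k)
                                   \<and> st' = S @ [\<nu>[k := u]]))
    \<or> (x \<in> Itn k \<and> (\<exists>S \<nu> u. st = S @ [\<nu>] \<and> u \<in> Fi k x (\<nu> ! k) \<and> st' = S @ [\<nu>[k := u]])))}"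

fun Ssem :: "nat \<Rightarrow> (nat \<Rightarrow> 'a set) \<Rightarrow> (nat \<Rightarrow> 'a set) \<Rightarrow> (nat \<Rightarrow> 'a set) \<Rightarrow> (nat \<Rightarrow> 'v set)
    \<Rightarrow> (nat \<Rightarrow> 'a \<Rightarrow> 'v \<Rightarrow> 'v set) \<Rightarrow> (nat \<Rightarrow> 'a \<Rightarrow> 'v \<Rightarrow> 'v \<Rightarrow> 'v set) \<Rightarrow> (nat \<Rightarrow> 'a \<Rightarrow> 'v \<Rightarrow> 'v set)
    \<Rightarrow> 'a list \<Rightarrow> ('v list list \<times> 'v list list) set" where
  "Ssem n Cal Ret Itn V Fc Fr Fi [] = Id_on (sconf n V)"
| "Ssem n Cal Ret Itn V Fc Fr Fi (x # w) =
     Sstep n Cal Ret Itn V Fc Fr Fi x O Ssem n Cal Ret Itn V Fc Fr Fi w"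

text \<open>Assertions are predicates on global valuations (tuples (\<nu>_1,...,\<nu>_n) as lists).
  For the n-stack semantics the tuple of top frames is map last cfg.\<close>
definition valid_M where
  "valid_M n Cal Ret Itn V Fc Fr Fi (A :: 'v list \<Rightarrow> bool) \<rho> B \<longleftrightarrow>
     (\<forall>(cfg, cfg') \<in> Msem n Cal Ret Itn V Fc Fr Fi \<rho>. A (map last cfg) \<longrightarrow> B (map last cfg'))"

definition valid_S where
  "valid_S n Cal Ret Itn V Fc Fr Fi (A :: 'v list \<Rightarrow> bool) \<rho> B \<longleftrightarrow>
     (\<forall>(st, st') \<in> Ssem n Cal Ret Itn V Fc Fr Fi \<rho>. A (last st) \<longrightarrow> B (last st'))"

end

theory Submission
  imports Defs
begin

locale vctx =
  fixes n :: nat and Cal Ret Itn :: "nat \<Rightarrow> 'a set" and V :: "nat \<Rightarrow> 'v set"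
    and Fc Fi :: "nat \<Rightarrow> 'a \<Rightarrow> 'v \<Rightarrow> 'v set"
    and Fr :: "nat \<Rightarrow> 'a \<Rightarrow> 'v \<Rightarrow> 'v \<Rightarrow> 'v set"
  assumes vp: "vp_alphabets n Cal Ret Itn"
begin

abbreviation "MS \<equiv> Msem n Cal Ret Itn V Fc Fr Fi"
abbreviation "SS \<equiv> Ssem n Cal Ret Itn V Fc Fr Fi"
abbreviation "MT \<equiv> Mstep n Cal Ret Itn V Fc Fr Fi"
abbreviation "ST \<equiv> Sstep n Cal Ret Itn V Fc Fr Fi"

lemma sig_uniq: "k<n \<Longrightarrow> j<n \<Longrightarrow> x \<in> Sig Cal Ret Itn k \<Longrightarrow> x \<in> Sig Cal Ret Itn j \<Longrightarrow> j = k"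
  using vp unfolding vp_alphabets_def by blast

lemma disj: "k<n \<Longrightarrow> Cal k \<inter> Ret k = {} \<and> Cal k \<inter> Itn k = {} \<and> Ret k \<inter> Itn k = {}"
  using vp unfolding vp_alphabets_def by blast

lemma uniq_k: assumes "k<n" "x \<in> Sig Cal Ret Itn k"
  shows "\<And>k'. k'<n \<Longrightarrow> x \<in> Cal k' \<or> x \<in> Ret k' \<or> x \<in> Itn k' \<Longrightarrow> k' = k"
  using sig_uniq[OF assms(1) _ assms(2)] unfolding Sig_def by blast

lemma Mstep_call: assumes "k<n" "x \<in> Cal k"
  shows "(cfg,cfg') \<in> MT x \<longleftrightarrow> cfg \<in> mconf n V \<and> (\<exists>S \<nu> \<nu>'. cfg!k = S@[\<nu>] \<and> \<nu>' \<in> Fc k x \<nu> \<and> cfg' = cfg[k := S@[\<nu>,\<nu>']])"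
proof -
  have u: "\<And>k'. k'<n \<Longrightarrow> x \<in> Cal k' \<or> x \<in> Ret k' \<or> x \<in> Itn k' \<Longrightarrow> k' = k"
    using uniq_k assms unfolding Sig_def by blast
  have d: "x \<notin> Ret k" "x \<notin> Itn k" using disj[OF assms(1)] assms by auto
  show ?thesis unfolding Mstep_def using u d assms by blast
qed

lemma Mstep_ret: assumes "k<n" "x \<in> Ret k"
  shows "(cfg,cfg') \<in> MT x \<longleftrightarrow> cfg \<in> mconf n V \<and> (\<exists>S \<nu>0 \<nu> \<nu>'. cfg!k = S@[\<nu>0,\<nu>] \<and> \<nu>' \<in> Fr k x \<nu> \<nu>0 \<and> cfg' = cfg[k := S@[\<nu>']])"
proof -
  have u: "\<And>k'. k'<n \<Longrightarrow> x \<in> Cal k' \<or> x \<in> Ret k' \<or> x \<in> Itn k' \<Longrightarrow> k' = k"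
    using uniq_k assms unfolding Sig_def by blast
  have d: "x \<notin> Cal k" "x \<notin> Itn k" using disj[OF assms(1)] assms by auto
  show ?thesis unfolding Mstep_def using u d assms by blast
qed

lemma Mstep_int: assumes "k<n" "x \<in> Itn k"
  shows "(cfg,cfg') \<in> MT x \<longleftrightarrow> cfg \<in> mconf n V \<and> (\<exists>S \<nu> \<nu>'. cfg!k = S@[\<nu>] \<and> \<nu>' \<in> Fi k x \<nu> \<and> cfg' = cfg[k := S@[\<nu>']])"
proof -
  have u: "\<And>k'. k'<n \<Longrightarrow> x \<in> Cal k' \<or> x \<in> Ret k' \<or> x \<in> Itn k' \<Longrightarrow> k' = k"
    using uniq_k assms unfolding Sig_def by blast
  have d: "x \<notin> Cal k" "x \<notin> Ret k" using disj[OF assms(1)] assms by auto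
  show ?thesis unfolding Mstep_def using u d assms by blast
qed

lemma Sstep_call: assumes "k<n" "x \<in> Cal k"
  shows "(st,st') \<in> ST x \<longleftrightarrow> st \<in> sconf n V \<and> (\<exists>S \<nu> u. st = S@[\<nu>] \<and> u \<in> Fc k x (\<nu>!k) \<and> st' = S@[\<nu>, \<nu>[k:=u]])"
proof -
  have u: "\<And>k'. k'<n \<Longrightarrow> x \<in> Cal k' \<or> x \<in> Ret k' \<or> x \<in> Itn k' \<Longrightarrow> k' = k"
    using uniq_k assms unfolding Sig_def by blast
  have d: "x \<notin> Ret k" "x \<notin> Itn k" using disj[OF assms(1)] assms by auto
  show ?thesis unfolding Sstep_def using u d assms by blast
qed

lemma Sstep_ret: assumes "k<n" "x \<in> Ret k"
  shows "(st,st') \<in> ST x \<longleftrightarrow> st \<in> sconf n V \<and> (\<exists>S \<nu>0 \<nu> u. st = S@[\<nu>0,\<nu>] \<and> u \<in> Fr k x (\<nu>!k) (\<nu>0!k) \<and> st' = S@[\<nu>[k:=u]])"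
proof -
  have u: "\<And>k'. k'<n \<Longrightarrow> x \<in> Cal k' \<or> x \<in> Ret k' \<or> x \<in> Itn k' \<Longrightarrow> k' = k"
    using uniq_k assms unfolding Sig_def by blast
  have d: "x \<notin> Cal k" "x \<notin> Itn k" using disj[OF assms(1)] assms by auto
  show ?thesis unfolding Sstep_def using u d assms by blast
qed

lemma Sstep_int: assumes "k<n" "x \<in> Itn k"
  shows "(st,st') \<in> ST x \<longleftrightarrow> st \<in> sconf n V \<and> (\<exists>S \<nu> u. st = S@[\<nu>] \<and> u \<in> Fi k x (\<nu>!k) \<and> st' = S@[\<nu>[k:=u]])"
proof -
  have u: "\<And>k'. k'<n \<Longrightarrow> x \<in> Cal k' \<or> x \<in> Ret k' \<or> x \<in> Itn k' \<Longrightarrow> k' = k"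
    using uniq_k assms unfolding Sig_def by blast
  have d: "x \<notin> Cal k" "x \<notin> Ret k" using disj[OF assms(1)] assms by auto
  show ?thesis unfolding Sstep_def using u d assms by blast
qed

lemma Mstep_dom: "(a,b) \<in> MT x \<Longrightarrow> a \<in> mconf n V" unfolding Mstep_def by auto
lemma Sstep_dom: "(a,b) \<in> ST x \<Longrightarrow> a \<in> sconf n V" unfolding Sstep_def by auto

lemma Msem_dom: "(a,b) \<in> MS w \<Longrightarrow> a \<in> mconf n V \<and> b \<in> mconf n V"
  by (induction w arbitrary: a) (auto dest: Mstep_dom)
lemma Ssem_dom: "(a,b) \<in> SS w \<Longrightarrow> a \<in> sconf n V \<and> b \<in> sconf n V"
  by (induction w arbitrary: a) (auto dest: Sstep_dom)

lemma Msem_append: "MS (u@v) = MS u O MS v"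
proof (induction u)
  case Nil
  show ?case using Msem_dom[of _ _ v] by (auto simp: Id_on_def)
next
  case (Cons x u) then show ?case by (simp add: O_assoc)
qed

lemma Ssem_append: "SS (u@v) = SS u O SS v"
proof (induction u)
  case Nil
  show ?case using Ssem_dom[of _ _ v] by (auto simp: Id_on_def)
next
  case (Cons x u) then show ?case by (simp add: O_assoc)
qed

end


inductive wn :: "nat \<Rightarrow> (nat \<Rightarrow> 'a set) \<Rightarrow> (nat \<Rightarrow> 'a set) \<Rightarrow> (nat \<Rightarrow> 'a set) \<Rightarrow> 'a list \<Rightarrow> bool"
  for n Cal Ret Itn where
  wn_Nil: "wn n Cal Ret Itn []"
| wn_int: "k<n \<Longrightarrow> a \<in> Itn k \<Longrightarrow> wn n Cal Ret Itn [a]"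
| wn_nest: "k<n \<Longrightarrow> c \<in> Cal k \<Longrightarrow> r \<in> Ret k \<Longrightarrow> wn n Cal Ret Itn u \<Longrightarrow> wn n Cal Ret Itn (c # u @ [r])"
| wn_app: "wn n Cal Ret Itn u \<Longrightarrow> wn n Cal Ret Itn v \<Longrightarrow> wn n Cal Ret Itn (u @ v)"

context vctx begin

lemma sconf_app: "S @ st \<in> sconf n V \<longleftrightarrow> set S \<subseteq> gval n V \<and> (st \<in> sconf n V \<or> (st = [] \<and> S \<noteq> []))"
  unfolding sconf_def by auto

lemma Sstep_frame: assumes st: "(st, st') \<in> ST x" and S: "set S \<subseteq> gval n V" shows "(S@st, S@st') \<in> ST x"
proof -
  obtain k where k: "k<n" "x \<in> Cal k \<or> x \<in> Ret k \<or> x \<in> Itn k" using st unfolding Sstep_def by blast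
  have sc: "st \<in> sconf n V" using st by (rule Sstep_dom)
  then have sc': "S@st \<in> sconf n V" using S by (auto simp: sconf_def)
  from k(2) show ?thesis
  proof (elim disjE)
    assume x: "x \<in> Cal k"
    then obtain S0 \<nu> u where h: "st = S0@[\<nu>]" "u \<in> Fc k x (\<nu>!k)" "st' = S0@[\<nu>, \<nu>[k:=u]]"
      using Sstep_call[OF k(1) x] st by blast
    show ?thesis unfolding Sstep_call[OF k(1) x] using sc' h by (intro conjI exI[where x="S@S0"]) auto
  next
    assume x: "x \<in> Ret k"
    then obtain S0 \<nu>0 \<nu> u where h: "st = S0@[\<nu>0,\<nu>]" "u \<in> Fr k x (\<nu>!k) (\<nu>0!k)" "st' = S0@[\<nu>[k:=u]]"
      using Sstep_ret[OF k(1) x] st by blast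
    show ?thesis unfolding Sstep_ret[OF k(1) x] using sc' h by (intro conjI exI[where x="S@S0"]) auto
  next
    assume x: "x \<in> Itn k"
    then obtain S0 \<nu> u where h: "st = S0@[\<nu>]" "u \<in> Fi k x (\<nu>!k)" "st' = S0@[\<nu>[k:=u]]"
      using Sstep_int[OF k(1) x] st by blast
    show ?thesis unfolding Sstep_int[OF k(1) x] using sc' h by (intro conjI exI[where x="S@S0"]) auto
  qed
qed

lemma S_frame_add: "(st, st') \<in> SS w \<Longrightarrow> set S \<subseteq> gval n V \<Longrightarrow> (S@st, S@st') \<in> SS w"
proof (induction w arbitrary: st)
  case Nil
  then show ?case by (auto simp: sconf_def)
next
  case (Cons x w)
  then obtain st1 where "(st,st1) \<in> ST x" "(st1,st') \<in> SS w" by auto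
  moreover have "(S@st, S@st1) \<in> ST x" using Sstep_frame calculation Cons.prems by blast
  moreover have "(S@st1, S@st') \<in> SS w" using Cons calculation by blast
  ultimately show ?case by auto
qed

lemma S_strip: "wn n Cal Ret Itn w \<Longrightarrow> (S@[\<nu>], st') \<in> SS w \<Longrightarrow> \<exists>\<nu>'. st' = S@[\<nu>'] \<and> ([\<nu>],[\<nu>']) \<in> SS w"
proof (induction w arbitrary: S \<nu> st' rule: wn.induct)
  case wn_Nil
  then show ?case by (auto simp: sconf_def)
next
  case (wn_int k a)
  then obtain st1 where 1: "(S@[\<nu>],st1) \<in> ST a" "(st1, st') \<in> Id_on (sconf n V)" by auto
  then obtain u where "u \<in> Fi k a (\<nu>!k)" "st1 = S@[\<nu>[k:=u]]" "S@[\<nu>] \<in> sconf n V"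
    using Sstep_int[OF wn_int(1,2)] by auto
  moreover have "([\<nu>],[\<nu>[k:=u]]) \<in> ST a" using Sstep_int[OF wn_int(1,2)] calculation by (auto simp: sconf_def)
  moreover have "([\<nu>[k:=u]],[\<nu>[k:=u]]) \<in> Id_on (sconf n V)" using 1 calculation by (auto simp: sconf_def)
  ultimately show ?case using 1 by auto
next
  case (wn_nest k c r u)
  from wn_nest.prems obtain st1 st2 where 1: "(S@[\<nu>],st1) \<in> ST c" "(st1, st2) \<in> SS u" "(st2,st') \<in> SS [r]"
    by (auto simp: Ssem_append)
  then obtain u0 where u0: "u0 \<in> Fc k c (\<nu>!k)" "st1 = (S@[\<nu>])@[\<nu>[k:=u0]]" and sc: "S@[\<nu>] \<in> sconf n V"
    using Sstep_call[OF wn_nest(1,2)] by auto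
  then obtain \<nu>2 where 2: "st2 = (S@[\<nu>])@[\<nu>2]" "([\<nu>[k:=u0]],[\<nu>2]) \<in> SS u" using wn_nest.IH 1 by blast
  from 1(3) obtain st3 where 3: "(st2,st3) \<in> ST r" "(st3,st') \<in> Id_on (sconf n V)" by auto
  then obtain w where w: "w \<in> Fr k r (\<nu>2!k) (\<nu>!k)" "st3 = S@[\<nu>2[k:=w]]" using Sstep_ret[OF wn_nest(1,3)] 2 by auto
  have g: "\<nu> \<in> gval n V" using sc by (auto simp: sconf_def)
  have a: "([\<nu>],[\<nu>,\<nu>[k:=u0]]) \<in> ST c" using Sstep_call[OF wn_nest(1,2)] u0 g by (auto simp: sconf_def)
  have b: "([\<nu>]@[\<nu>[k:=u0]],[\<nu>]@[\<nu>2]) \<in> SS u" using S_frame_add[OF 2(2), of "[\<nu>]"] g by simp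
  have s2: "[\<nu>,\<nu>2] \<in> sconf n V" using Ssem_dom[OF b] by simp
  have c: "([\<nu>,\<nu>2],[\<nu>2[k:=w]]) \<in> ST r" using Sstep_ret[OF wn_nest(1,3)] w s2 by force
  have d: "([\<nu>2[k:=w]],[\<nu>2[k:=w]]) \<in> Id_on (sconf n V)" using 3 w by (auto simp: sconf_def)
  have "([\<nu>],[\<nu>2[k:=w]]) \<in> SS (c # u @ [r])" using a b c d by (auto simp: Ssem_append)
  then show ?case using 3 w by auto
next
  case (wn_app u v)
  then obtain st1 where "(S@[\<nu>],st1) \<in> SS u" "(st1,st') \<in> SS v" by (auto simp: Ssem_append)
  then show ?case using wn_app.IH by (fastforce simp: Ssem_append)
qed

end


context vctx begin

lemma mconf_gval: "c \<in> mconf n V \<Longrightarrow> map last c \<in> gval n V"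
  unfolding mconf_def gval_def using last_in_set by fastforce

lemma mconf_sconf: "c \<in> mconf n V \<Longrightarrow> [map last c] \<in> sconf n V"
  using mconf_gval unfolding sconf_def by auto

lemma mconf_split: "c \<in> mconf n V \<Longrightarrow> j<n \<Longrightarrow> c!j = butlast (c!j) @ [last (c!j)]"
  unfolding mconf_def by auto

lemma mconf_len: "c \<in> mconf n V \<Longrightarrow> length c = n"
  unfolding mconf_def by auto

lemma M1: "wn n Cal Ret Itn w \<Longrightarrow> (c,c') \<in> MS w \<Longrightarrow>
   ([map last c],[map last c']) \<in> SS w \<and> length c' = length c \<and> (\<forall>j<length c. butlast (c'!j) = butlast (c!j))"
proof (induction w arbitrary: c c' rule: wn.induct)
  case wn_Nil
  then show ?case using mconf_sconf by auto
next
  case (wn_int k a)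
  then obtain c1 where 1: "(c,c1) \<in> MT a" "(c1,c') \<in> Id_on (mconf n V)" by auto
  then obtain S \<nu> \<nu>' where h: "c \<in> mconf n V" "c!k = S@[\<nu>]" "\<nu>' \<in> Fi k a \<nu>" "c1 = c[k := S@[\<nu>']]"
    using Mstep_int[OF wn_int(1,2)] by blast
  have len: "length c = n" using h mconf_len by auto
  have ml: "map last c1 = (map last c)[k := \<nu>']" using h by (simp add: map_update)
  have mk: "(map last c)!k = \<nu>" using h len wn_int(1) by simp
  have s1: "([map last c],[map last c1]) \<in> ST a"
    unfolding Sstep_int[OF wn_int(1,2)] using mconf_sconf[OF h(1)] ml mk h(3)
    by (intro conjI exI[where x="[]"] exI[where x="map last c"] exI[where x="\<nu>'"]) auto
  have s2: "([map last c1],[map last c']) \<in> Id_on (sconf n V)" using 1 mconf_sconf by auto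
  have "([map last c],[map last c']) \<in> SS [a]" using s1 s2 by auto
  moreover have "length c' = length c" using 1 h by auto
  moreover have "\<forall>j<length c. butlast (c'!j) = butlast (c!j)" using 1 h len wn_int(1) by (auto simp: nth_list_update)
  ultimately show ?case by blast
next
  case (wn_nest k c0 r u)
  from wn_nest.prems obtain c1 c2 where 1: "(c,c1) \<in> MT c0" "(c1, c2) \<in> MS u" "(c2,c') \<in> MS [r]"
    by (auto simp: Msem_append)
  then obtain S \<nu> u0 where h: "c \<in> mconf n V" "c!k = S@[\<nu>]" "u0 \<in> Fc k c0 \<nu>" "c1 = c[k := S@[\<nu>,u0]]"
    using Mstep_call[OF wn_nest(1,2)] by blast
  have len: "length c = n" using h mconf_len by auto
  have IH: "([map last c1],[map last c2]) \<in> SS u" "length c2 = length c1" "\<forall>j<length c1. butlast (c2!j) = butlast (c1!j)"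
    using wn_nest.IH[OF 1(2)] by auto
  from 1(3) obtain c3 where 3: "(c2,c3) \<in> MT r" "(c3,c') \<in> Id_on (mconf n V)" by auto
  then obtain S' \<nu>0 \<nu>2 w where h3: "c2 \<in> mconf n V" "c2!k = S'@[\<nu>0,\<nu>2]" "w \<in> Fr k r \<nu>2 \<nu>0" "c3 = c2[k := S'@[w]]"
    using Mstep_ret[OF wn_nest(1,3)] by blast
  have "butlast (c2!k) = S@[\<nu>]" using IH(3) h len wn_nest(1) by (auto simp: butlast_append)
  then have SS': "S' = S" "\<nu>0 = \<nu>" using h3(2) by (auto simp: butlast_append)
  have len1: "length c1 = n" using h len by simp
  have ml1: "map last c1 = (map last c)[k := u0]" using h by (simp add: map_update)
  have mk: "(map last c)!k = \<nu>" using h len wn_nest(1) by simp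
  have ml3: "map last c3 = (map last c2)[k := w]" using h3 by (simp add: map_update)
  have mk2: "(map last c2)!k = \<nu>2" using h3 IH(2) len1 wn_nest(1) by simp
  have g: "map last c \<in> gval n V" using mconf_gval h(1) by auto
  have a: "([map last c],[map last c, map last c1]) \<in> ST c0"
    unfolding Sstep_call[OF wn_nest(1,2)] using mconf_sconf[OF h(1)] ml1 mk h(3)
    by (intro conjI exI[where x="[]"] exI[where x="map last c"] exI[where x="u0"]) auto
  have b: "([map last c]@[map last c1],[map last c]@[map last c2]) \<in> SS u"
    using S_frame_add[OF IH(1), of "[map last c]"] g by simp
  have s2: "[map last c, map last c2] \<in> sconf n V" using Ssem_dom[OF b] by simp
  have c: "([map last c, map last c2],[map last c3]) \<in> ST r"
    unfolding Sstep_ret[OF wn_nest(1,3)] using s2 ml3 mk mk2 h3(3) SS'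
    by (intro conjI exI[where x="[]"] exI[where x="map last c"] exI[where x="map last c2"] exI[where x="w"]) auto
  have d: "([map last c3],[map last c']) \<in> Id_on (sconf n V)" using 3 mconf_sconf by auto
  have "([map last c],[map last c']) \<in> SS (c0 # u @ [r])" unfolding Ssem_append Ssem.simps using a b[simplified] c d by (meson relcompI)
  moreover have "length c' = length c" using 3 h3 IH(2) h by auto
  moreover have "\<forall>j<length c. butlast (c'!j) = butlast (c!j)"
  proof (intro allI impI)
    fix j assume j: "j < length c"
    show "butlast (c'!j) = butlast (c!j)"
    proof (cases "j = k")
      case True then show ?thesis using 3 h3 h SS' IH(2) len1 len wn_nest(1) by auto
    next
      case False
      then have "c'!j = c2!j" "c1!j = c!j" using 3 h3 h by auto
      then show ?thesis using IH(3) j len len1 by metis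
    qed
  qed
  ultimately show ?case by blast
next
  case (wn_app u v)
  then obtain c1 where "(c,c1) \<in> MS u" "(c1,c') \<in> MS v" by (auto simp: Msem_append)
  then show ?case using wn_app.IH by (fastforce simp: Ssem_append)
qed

lemma mconf_upd: "c \<in> mconf n V \<Longrightarrow> k<n \<Longrightarrow> s \<noteq> [] \<Longrightarrow> set s \<subseteq> V k \<Longrightarrow> c[k:=s] \<in> mconf n V"
  unfolding mconf_def by (auto simp: nth_list_update)

lemma gval_nth: "\<nu> \<in> gval n V \<Longrightarrow> k<n \<Longrightarrow> \<nu>!k \<in> V k"
  unfolding gval_def by auto

lemma gval_len: "\<nu> \<in> gval n V \<Longrightarrow> length \<nu> = n"
  unfolding gval_def by auto

lemma mconf_butlast_set: "c \<in> mconf n V \<Longrightarrow> k<n \<Longrightarrow> set (butlast (c!k)) \<subseteq> V k"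
  unfolding mconf_def by (auto dest: in_set_butlastD)

lemma M2: "wn n Cal Ret Itn w \<Longrightarrow> ([\<nu>],[\<nu>']) \<in> SS w \<Longrightarrow> c \<in> mconf n V \<Longrightarrow> map last c = \<nu> \<Longrightarrow>
   \<exists>c'. (c,c') \<in> MS w \<and> map last c' = \<nu>'"
proof (induction w arbitrary: \<nu> \<nu>' c rule: wn.induct)
  case wn_Nil
  then show ?case by auto
next
  case (wn_int k a)
  then obtain st1 where 1: "([\<nu>],st1) \<in> ST a" "(st1,[\<nu>']) \<in> Id_on (sconf n V)" by auto
  then obtain u where h: "u \<in> Fi k a (\<nu>!k)" "st1 = [\<nu>[k:=u]]"
    using Sstep_int[OF wn_int(1,2)] by (auto simp: Cons_eq_append_conv)
  have len: "length c = n" using wn_int mconf_len by auto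
  have nu': "\<nu>' = \<nu>[k:=u]" "\<nu>' \<in> gval n V" using 1 h by (auto simp: sconf_def)
  have uV: "u \<in> V k" using gval_nth[OF nu'(2) wn_int(1)] nu'(1) gval_len[OF nu'(2)] wn_int(1) by auto
  define c' where "c' = c[k := butlast (c!k) @ [u]]"
  have ck: "c!k = butlast (c!k) @ [\<nu>!k]" using mconf_split[OF wn_int(4,1)] wn_int(5) len wn_int(1) by auto
  have c'm: "c' \<in> mconf n V" unfolding c'_def
    using mconf_upd[OF wn_int(4,1)] mconf_butlast_set[OF wn_int(4,1)] uV by auto
  have "(c,c') \<in> MT a" unfolding Mstep_int[OF wn_int(1,2)] c'_def using wn_int(4) ck h(1)
    by (intro conjI exI[where x="butlast (c!k)"] exI[where x="\<nu>!k"] exI[where x=u]) auto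
  moreover have "map last c' = \<nu>'" unfolding c'_def nu'(1) using wn_int(5) by (simp add: map_update)
  ultimately show ?case using c'm by auto
next
  case (wn_nest k c0 r u)
  from wn_nest.prems(1) obtain st1 st2 st3 where 1: "([\<nu>],st1) \<in> ST c0" "(st1, st2) \<in> SS u" "(st2,st3) \<in> ST r"
     "(st3,[\<nu>']) \<in> Id_on (sconf n V)"
    by (auto simp: Ssem_append)
  then obtain u0 where u0: "u0 \<in> Fc k c0 (\<nu>!k)" "st1 = [\<nu>]@[\<nu>[k:=u0]]"
    using Sstep_call[OF wn_nest(1,2)] by (auto simp: Cons_eq_append_conv)
  then obtain \<nu>2 where 2: "st2 = [\<nu>]@[\<nu>2]" "([\<nu>[k:=u0]],[\<nu>2]) \<in> SS u" using S_strip[OF wn_nest(4)] 1 by blast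
  obtain w where w: "w \<in> Fr k r (\<nu>2!k) (\<nu>!k)" "st3 = [\<nu>2[k:=w]]" using Sstep_ret[OF wn_nest(1,3)] 2 1(3)
    by (auto simp: Cons_eq_append_conv)
  have nu': "\<nu>' = \<nu>2[k:=w]" "\<nu>' \<in> gval n V" using 1(4) w by (auto simp: sconf_def)
  have len: "length c = n" using wn_nest mconf_len by auto
  have s2: "[\<nu>] @ [\<nu>[k:=u0]] \<in> sconf n V" using Ssem_dom 1(2) u0 by blast
  then have g1: "\<nu>[k:=u0] \<in> gval n V" by (auto simp: sconf_def)
  have u0V: "u0 \<in> V k" using gval_nth[OF g1 wn_nest(1)] gval_len[OF g1] wn_nest(1) by auto
  obtain B where ck: "c!k = B @ [\<nu>!k]" using mconf_split[OF wn_nest.prems(2) wn_nest(1)] wn_nest.prems(3) len wn_nest(1) by (metis nth_map)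
  have "set (c!k) \<subseteq> V k" using wn_nest.prems(2) wn_nest(1) unfolding mconf_def by auto
  then have BV: "set B \<subseteq> V k" "\<nu>!k \<in> V k" using ck by auto
  define c1 where "c1 = c[k := B @ [\<nu>!k, u0]]"
  have c1m: "c1 \<in> mconf n V" unfolding c1_def
    using mconf_upd[OF wn_nest.prems(2) wn_nest(1)] BV u0V by auto
  have m1: "(c,c1) \<in> MT c0" unfolding Mstep_call[OF wn_nest(1,2)] c1_def using wn_nest.prems(2) ck u0(1)
    by blast
  have ml1: "map last c1 = \<nu>[k:=u0]" unfolding c1_def using wn_nest.prems(3) by (simp add: map_update)
  obtain c2 where c2: "(c1,c2) \<in> MS u" "map last c2 = \<nu>2" using wn_nest.IH[OF 2(2) c1m ml1] by blast
  have fr: "length c2 = length c1" "\<forall>j<length c1. butlast (c2!j) = butlast (c1!j)" using M1[OF wn_nest(4) c2(1)] by auto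
  have c2m: "c2 \<in> mconf n V" using Msem_dom c2(1) by blast
  have len1: "length c1 = n" using c1m mconf_len by auto
  have bl: "butlast (c2!k) = B @ [\<nu>!k]" using fr(2) len1 wn_nest(1) len unfolding c1_def by (simp add: butlast_append)
  have la: "last (c2!k) = \<nu>2!k" using c2(2) fr(1) len1 wn_nest(1) by (metis nth_map)
  have c2k: "c2!k = B @ [\<nu>!k, \<nu>2!k]"
    using mconf_split[OF c2m wn_nest(1)] bl la by simp
  define c3 where "c3 = c2[k := B @ [w]]"
  have wV: "w \<in> V k" using gval_nth[OF nu'(2) wn_nest(1)] nu'(1) gval_len[OF nu'(2)] wn_nest(1) by auto
  have c3m: "c3 \<in> mconf n V" unfolding c3_def
    using mconf_upd[OF c2m wn_nest(1)] BV wV by auto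
  have m3: "(c2,c3) \<in> MT r" unfolding Mstep_ret[OF wn_nest(1,3)] c3_def using c2m c2k w(1)
    by blast
  have ml3: "map last c3 = \<nu>'" unfolding c3_def nu'(1) using c2(2) by (simp add: map_update)
  have "(c,c3) \<in> MS (c0 # u @ [r])" unfolding Msem_append Msem.simps using m1 c2(1) m3 c3m by blast
  then show ?case using ml3 by blast
next
  case (wn_app u v)
  from wn_app.prems(1) obtain st where 1: "([\<nu>],st) \<in> SS u" "(st,[\<nu>']) \<in> SS v" by (auto simp: Ssem_append)
  then obtain \<nu>1 where st: "st = [\<nu>1]" "([\<nu>],[\<nu>1]) \<in> SS u" using S_strip[OF wn_app(1), of "[]"] by auto
  obtain c1 where c1: "(c,c1) \<in> MS u" "map last c1 = \<nu>1" using wn_app.IH(1)[OF st(2) wn_app.prems(2,3)] by blast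
  have "c1 \<in> mconf n V" using Msem_dom c1(1) by blast
  then obtain c2 where "(c1,c2) \<in> MS v" "map last c2 = \<nu>'" using wn_app.IH(2) 1(2) st(1) c1(2) by blast
  then show ?case using c1 by (auto simp: Msem_append)
qed

end


fun hh :: "'a set \<Rightarrow> 'a set \<Rightarrow> 'a list \<Rightarrow> int" where
  "hh Cs Rs [] = 0"
| "hh Cs Rs (x#w) = (if x \<in> Cs then 1 else if x \<in> Rs then -1 else 0) + hh Cs Rs w"

lemma hh_append[simp]: "hh Cs Rs (u@v) = hh Cs Rs u + hh Cs Rs v"
  by (induction u) auto

lemma wm_count: "wm Cs Rs Is w \<Longrightarrow> Cs \<inter> Rs = {} \<Longrightarrow> Cs \<inter> Is = {} \<Longrightarrow> Rs \<inter> Is = {} \<Longrightarrow> hh Cs Rs w = 0 \<and> (\<forall>p s. w = p@s \<longrightarrow> 0 \<le> hh Cs Rs p)"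
proof (induction rule: wm.induct)
  case wm_Nil
  then show ?case by auto
next
  case (wm_int a)
  then show ?case by (auto simp: Cons_eq_append_conv)
next
  case (wm_nest c r u)
  have rc: "r \<notin> Cs" using wm_nest by auto
  have "0 \<le> hh Cs Rs p" if "c # u @ [r] = p @ s" for p s
  proof (cases p)
    case Nil then show ?thesis by simp
  next
    case (Cons y p')
    then have y: "y = c" "u @ [r] = p' @ s" using that by auto
    from y(2) obtain us where "(u = p' @ us \<and> us @ [r] = s) \<or> (u @ us = p' \<and> [r] = us @ s)"
      by (auto simp: append_eq_append_conv2)
    then show ?thesis
    proof
      assume "u = p' @ us \<and> us @ [r] = s"
      then have "0 \<le> hh Cs Rs p'" using wm_nest by blast
      then show ?thesis using Cons y wm_nest by auto
    next
      assume h: "u @ us = p' \<and> [r] = us @ s"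
      then have "us = [] \<or> us = [r]" by (cases us) auto
      then show ?thesis using h Cons y wm_nest rc by auto
    qed
  qed
  then show ?case using wm_nest rc by auto
next
  case (wm_app u v)
  have "0 \<le> hh Cs Rs p" if "u @ v = p @ s" for p s
  proof -
    from that obtain us where "(u = p @ us \<and> us @ v = s) \<or> (u @ us = p \<and> v = us @ s)"
      by (auto simp: append_eq_append_conv2)
    then show ?thesis
    proof
      assume "u = p @ us \<and> us @ v = s" then show ?thesis using wm_app by blast
    next
      assume h: "u @ us = p \<and> v = us @ s"
      then have "0 \<le> hh Cs Rs us" using wm_app by blast
      then show ?thesis using h wm_app by auto
    qed
  qed
  then show ?case using wm_app by auto
qed

lemma count_wm:
  assumes "Cs \<inter> Rs = {}" "Cs \<inter> Is = {}" "Rs \<inter> Is = {}"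
  shows "set w \<subseteq> Cs \<union> Rs \<union> Is \<Longrightarrow> hh Cs Rs w = 0 \<Longrightarrow> (\<forall>m. 0 \<le> hh Cs Rs (take m w)) \<Longrightarrow> wm Cs Rs Is w"
proof (induction "length w" arbitrary: w rule: less_induct)
  case less
  show ?case
  proof (cases w)
    case Nil then show ?thesis by (simp add: wm_Nil)
  next
    case (Cons x w')
    have x: "x \<in> Cs \<union> Rs \<union> Is" using less.prems Cons by auto
    have pw': "\<forall>m. 0 \<le> hh Cs Rs (take m w') + (if x \<in> Cs then 1 else if x \<in> Rs then -1 else 0)"
    proof
      fix m show "0 \<le> hh Cs Rs (take m w') + (if x \<in> Cs then 1 else if x \<in> Rs then -1 else 0)"
        using less.prems(3) Cons spec[OF less.prems(3), of "Suc m"] by auto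
    qed
    have xnR: "x \<notin> Rs \<or> x \<in> Cs" using spec[OF less.prems(3), of 1] Cons by (auto split: if_splits)
    show ?thesis
    proof (cases "x \<in> Cs")
      case False
      then have xI: "x \<in> Is" "x \<notin> Rs" using x xnR by auto
      have l: "length w' < length w" using Cons by simp
      have st: "set w' \<subseteq> Cs \<union> Rs \<union> Is" using less.prems(1) Cons by auto
      have h0: "hh Cs Rs w' = 0" using less.prems(2) Cons False xI by simp
      have pm: "\<forall>m. 0 \<le> hh Cs Rs (take m w')" using pw' False xI by simp
      have "wm Cs Rs Is w'" using less.hyps[OF l st h0 pm] .
      then have "wm Cs Rs Is ([x] @ w')" by (rule wm_app[OF wm_int[OF xI(1)]])
      then show ?thesis using Cons by simp
    next
      case True
      then have xR: "x \<notin> Rs" using assms by auto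
      have hw': "hh Cs Rs w' = -1" using less.prems(2) Cons True by auto
      define J where "J = {j. j \<le> length w' \<and> hh Cs Rs (take j w') = -1}"
      have "length w' \<in> J" using hw' J_def by auto
      define j where "j = Least (\<lambda>j. j \<in> J)"
      have jJ: "j \<in> J" using LeastI[of "\<lambda>j. j \<in> J", OF \<open>length w' \<in> J\<close>] j_def by simp
      have jmin: "\<And>m. m < j \<Longrightarrow> m \<notin> J" using not_less_Least j_def by blast
      have j0: "j \<noteq> 0" using jJ J_def by (cases "j = 0") auto
      have jl: "j \<le> length w'" using jJ J_def by auto
      have ge: "\<And>m. m < j \<Longrightarrow> 0 \<le> hh Cs Rs (take m w')"
      proof -
        fix m assume m: "m < j"
        have "-1 \<le> hh Cs Rs (take m w')" using spec[OF pw', of m] True by simp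
        moreover have "hh Cs Rs (take m w') \<noteq> -1" using jmin[OF m] m jl J_def by auto
        ultimately show "0 \<le> hh Cs Rs (take m w')" by linarith
      qed
      define u where "u = take (j-1) w'"
      define r where "r = w' ! (j-1)"
      define v where "v = drop j w'"
      have w'eq: "w' = u @ [r] @ v" unfolding u_def r_def v_def using j0 jl
        using id_take_nth_drop[of "j-1" w'] j0 jl by simp
      have tj: "take j w' = u @ [r]" using jl j0 unfolding u_def r_def
        using take_Suc_conv_app_nth[of "j-1" w'] j0 jl by simp
      have hu: "0 \<le> hh Cs Rs u" using ge[of "j-1"] j0 unfolding u_def by auto
      have hur: "hh Cs Rs (u @ [r]) = -1" using tj jJ J_def by auto
      have rR: "r \<in> Rs" "r \<notin> Cs" using hu hur by (auto split: if_splits)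
      have hu0: "hh Cs Rs u = 0" using hu hur rR by auto
      have setw': "set w' \<subseteq> Cs \<union> Rs \<union> Is" using less.prems(1) Cons by auto
      have pu: "\<forall>m. 0 \<le> hh Cs Rs (take m u)"
      proof
        fix m
        show "0 \<le> hh Cs Rs (take m u)"
        proof (cases "m < j")
          case True
          then have "m \<le> j - 1" by simp
          then have "take m u = take m w'" unfolding u_def by (simp add: min_def)
          then show ?thesis using ge True by simp
        next
          case False
          then have "take m u = u" unfolding u_def by simp
          then show ?thesis using hu by simp
        qed
      qed
      have lu: "length u < length w" using Cons w'eq by simp
      have su: "set u \<subseteq> Cs \<union> Rs \<union> Is" using setw' w'eq by auto
      have wmu: "wm Cs Rs Is u" using less.hyps[OF lu su hu0 pu] .
      have pv: "\<forall>m. 0 \<le> hh Cs Rs (take m v)"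
      proof
        fix m
        have "take (Suc (length u + 1 + m)) w = x # u @ [r] @ take m v" using Cons w'eq by simp
        then have "0 \<le> hh Cs Rs (x # u @ [r] @ take m v)" using less.prems(3) by metis
        then show "0 \<le> hh Cs Rs (take m v)" using True rR hu0 by simp
      qed
      have hv: "hh Cs Rs v = 0" using less.prems(2) Cons w'eq True rR hu0 by simp
      have lv: "length v < length w" using Cons w'eq by simp
      have sv: "set v \<subseteq> Cs \<union> Rs \<union> Is" using setw' w'eq by auto
      have wmv: "wm Cs Rs Is v" using less.hyps[OF lv sv hv pv] .
      have "wm Cs Rs Is ((x # u @ [r]) @ v)" by (rule wm_app[OF wm_nest[OF True rR(1) wmu] wmv])
      then show ?thesis using Cons w'eq by simp
    qed
  qed
qed



context vctx begin

abbreviation "CU \<equiv> (\<Union>k<n. Cal k)"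
abbreviation "RU \<equiv> (\<Union>k<n. Ret k)"
abbreviation "IU \<equiv> (\<Union>k<n. Itn k)"
abbreviation "SG k \<equiv> Sig Cal Ret Itn k"

lemma U_disj: "CU \<inter> RU = {}" "CU \<inter> IU = {}" "RU \<inter> IU = {}"
proof -
  have a: "\<And>x k j. k<n \<Longrightarrow> j<n \<Longrightarrow> x \<in> Cal k \<or> x \<in> Ret k \<or> x \<in> Itn k \<Longrightarrow> x \<in> Cal j \<or> x \<in> Ret j \<or> x \<in> Itn j \<Longrightarrow> j = k"
    using sig_uniq unfolding Sig_def by blast
  show "CU \<inter> RU = {}" using a disj by blast
  show "CU \<inter> IU = {}" using a disj by blast
  show "RU \<inter> IU = {}" using a disj by blast
qed

lemma hh_sum: "set w \<subseteq> (\<Union>k<n. SG k) \<Longrightarrow>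
  hh CU RU w = (\<Sum>k<n. hh (Cal k) (Ret k) (filter (\<lambda>x. x \<in> SG k) w))"
proof (induction w)
  case Nil then show ?case by simp
next
  case (Cons x w)
  obtain k0 where k0: "k0 < n" "x \<in> SG k0" using Cons.prems by auto
  have iff: "\<And>k. k<n \<Longrightarrow> x \<in> SG k \<longleftrightarrow> k = k0" using sig_uniq k0 by blast
  define d where "d = (\<lambda>k. (if x \<in> Cal k then 1 else if x \<in> Ret k then -1 else 0) :: int)"
  have split: "\<And>k. k<n \<Longrightarrow> hh (Cal k) (Ret k) (filter (\<lambda>x. x \<in> SG k) (x#w)) =
      (if k = k0 then d k else 0) + hh (Cal k) (Ret k) (filter (\<lambda>x. x \<in> SG k) w)"
    using iff unfolding d_def by auto
  have "(\<Sum>k<n. hh (Cal k) (Ret k) (filter (\<lambda>x. x \<in> SG k) (x#w))) =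
        (\<Sum>k<n. (if k = k0 then d k else 0) + hh (Cal k) (Ret k) (filter (\<lambda>x. x \<in> SG k) w))"
    using split by (intro sum.cong) auto
  also have "\<dots> = d k0 + (\<Sum>k<n. hh (Cal k) (Ret k) (filter (\<lambda>x. x \<in> SG k) w))"
    using k0(1) by (simp add: sum.distrib)
  also have "\<dots> = d k0 + hh CU RU w" using Cons by auto
  finally have e: "(\<Sum>k<n. hh (Cal k) (Ret k) (filter (\<lambda>x. x \<in> SG k) (x#w))) = d k0 + hh CU RU w" .
  have c: "x \<in> CU \<longleftrightarrow> x \<in> Cal k0" using iff k0 unfolding Sig_def by blast
  have r: "x \<in> RU \<longleftrightarrow> x \<in> Ret k0" using iff k0 unfolding Sig_def by blast
  show ?case using e c r unfolding d_def by simp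
qed

lemma bowtie_wm:
  assumes P: "\<forall>k<n. P k \<subseteq> lists (SG k) \<and> wm_vpl (Cal k) (Ret k) (Itn k) (P k)"
    and rho: "\<rho> \<in> shuffle n Cal Ret Itn P"
  shows "wm CU RU IU \<rho>"
proof -
  have set: "set \<rho> \<subseteq> (\<Union>k<n. SG k)" using rho unfolding shuffle_def by auto
  have wmk: "\<And>k. k<n \<Longrightarrow> wm (Cal k) (Ret k) (Itn k) (filter (\<lambda>x. x \<in> SG k) \<rho>)"
    using rho P unfolding shuffle_def wm_vpl_def by blast
  have cnt: "\<And>k. k<n \<Longrightarrow> hh (Cal k) (Ret k) (filter (\<lambda>x. x \<in> SG k) \<rho>) = 0 \<and>
      (\<forall>p s. filter (\<lambda>x. x \<in> SG k) \<rho> = p@s \<longrightarrow> 0 \<le> hh (Cal k) (Ret k) p)"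
    using wm_count wmk disj by blast
  show ?thesis
  proof (rule count_wm[OF U_disj])
    show "set \<rho> \<subseteq> CU \<union> RU \<union> IU" using set unfolding Sig_def by auto
    show "hh CU RU \<rho> = 0" using hh_sum[OF set] cnt by simp
    show "\<forall>m. 0 \<le> hh CU RU (take m \<rho>)"
    proof
      fix m
      have st: "set (take m \<rho>) \<subseteq> (\<Union>k<n. SG k)" using set by (meson in_set_takeD subset_iff)
      have "\<And>k. k<n \<Longrightarrow> 0 \<le> hh (Cal k) (Ret k) (filter (\<lambda>x. x \<in> SG k) (take m \<rho>))"
      proof -
        fix k assume k: "k<n"
        have "filter (\<lambda>x. x \<in> SG k) \<rho> = filter (\<lambda>x. x \<in> SG k) (take m \<rho>) @ filter (\<lambda>x. x \<in> SG k) (drop m \<rho>)"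
          by (metis append_take_drop_id filter_append)
        then show "0 \<le> hh (Cal k) (Ret k) (filter (\<lambda>x. x \<in> SG k) (take m \<rho>))" using cnt[OF k] by blast
      qed
      then show "0 \<le> hh CU RU (take m \<rho>)" using hh_sum[OF st] by (auto intro!: sum_nonneg)
    qed
  qed
qed

lemma wn_sub1: assumes "well_nested n Cal Ret Itn (c # u @ [r])" shows "well_nested n Cal Ret Itn u"
  unfolding well_nested_def
proof (intro allI impI)
  fix i j assume m: "matched CU RU IU u i j"
  then have ij: "i < j" "j < length u" unfolding matched_def by auto
  have "take (j - i - 1) (drop (i + 1) u) = take (Suc j - Suc i - 1) (drop (Suc i + 1) (c # u @ [r]))"
    using ij by simp
  then have "matched CU RU IU (c # u @ [r]) (Suc i) (Suc j)" using m ij unfolding matched_def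
    by (simp add: nth_append)
  then obtain k where "k<n" "(c # u @ [r]) ! Suc i \<in> SG k" "(c # u @ [r]) ! Suc j \<in> SG k"
    using assms unfolding well_nested_def by blast
  then show "\<exists>k<n. u ! i \<in> SG k \<and> u ! j \<in> SG k" using ij by (auto simp: nth_append)
qed

lemma wn_sub2: assumes "well_nested n Cal Ret Itn (u @ v)" shows "well_nested n Cal Ret Itn u"
  unfolding well_nested_def
proof (intro allI impI)
  fix i j assume m: "matched CU RU IU u i j"
  then have ij: "i < j" "j < length u" unfolding matched_def by auto
  have "take (j - i - 1) (drop (i + 1) u) = take (j - i - 1) (drop (i + 1) (u @ v))"
    using ij by simp
  then have "matched CU RU IU (u @ v) i j" using m ij unfolding matched_def
    by (simp add: nth_append)
  then obtain k where "k<n" "(u @ v) ! i \<in> SG k" "(u @ v) ! j \<in> SG k"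
    using assms unfolding well_nested_def by blast
  then show "\<exists>k<n. u ! i \<in> SG k \<and> u ! j \<in> SG k" using ij by (auto simp: nth_append)
qed

lemma wn_sub3: assumes "well_nested n Cal Ret Itn (u @ v)" shows "well_nested n Cal Ret Itn v"
  unfolding well_nested_def
proof (intro allI impI)
  fix i j assume m: "matched CU RU IU v i j"
  then have ij: "i < j" "j < length v" unfolding matched_def by auto
  have "take (j - i - 1) (drop (i + 1) v) = take ((j + length u) - (i + length u) - 1) (drop ((i + length u) + 1) (u @ v))"
    using ij by simp
  then have "matched CU RU IU (u @ v) (i + length u) (j + length u)" using m ij unfolding matched_def
    by (simp add: nth_append)
  then obtain k where "k<n" "(u @ v) ! (i + length u) \<in> SG k" "(u @ v) ! (j + length u) \<in> SG k"
    using assms unfolding well_nested_def by blast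
  then show "\<exists>k<n. v ! i \<in> SG k \<and> v ! j \<in> SG k" using ij by (auto simp: nth_append)
qed

lemma wm_wn: "wm CU RU IU w \<Longrightarrow> well_nested n Cal Ret Itn w \<Longrightarrow> wn n Cal Ret Itn w"
proof (induction rule: wm.induct)
  case wm_Nil
  show ?case by (rule wn_Nil)
next
  case (wm_int a)
  then obtain k where "k<n" "a \<in> Itn k" by auto
  then show ?case by (rule wn_int)
next
  case (wm_nest c r u)
  have "matched CU RU IU (c # u @ [r]) 0 (Suc (length u))"
    unfolding matched_def using wm_nest by (simp add: nth_append)
  then obtain k where k: "k<n" "c \<in> SG k" "r \<in> SG k"
    using wm_nest.prems unfolding well_nested_def by (metis nth_Cons_0 nth_Cons_Suc nth_append_length)
  obtain k1 where k1: "k1<n" "c \<in> Cal k1" using wm_nest by auto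
  obtain k2 where k2: "k2<n" "r \<in> Ret k2" using wm_nest by auto
  have "k1 = k" using sig_uniq[OF k(1) k1(1) k(2)] k1 unfolding Sig_def by blast
  moreover have "k2 = k" using sig_uniq[OF k(1) k2(1) k(3)] k2 unfolding Sig_def by blast
  ultimately have ck: "c \<in> Cal k" "r \<in> Ret k" using k1 k2 by auto
  have wu: "wn n Cal Ret Itn u" using wm_nest.IH[OF wn_sub1[OF wm_nest.prems]] .
  show ?case by (rule wn_nest[OF k(1) ck wu])
next
  case (wm_app u v)
  show ?case by (rule wn_app[OF wm_app.IH(1)[OF wn_sub2[OF wm_app.prems]] wm_app.IH(2)[OF wn_sub3[OF wm_app.prems]]])
qed

end


theorem theorem7p1:
  fixes n :: nat
    and Cal Ret Itn :: "nat \<Rightarrow> 'a set"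
    and P :: "nat \<Rightarrow> 'a list set"
    and V :: "nat \<Rightarrow> 'v set"
    and Fc Fi :: "nat \<Rightarrow> 'a \<Rightarrow> 'v \<Rightarrow> 'v set"
    and Fr :: "nat \<Rightarrow> 'a \<Rightarrow> 'v \<Rightarrow> 'v \<Rightarrow> 'v set"
    and A B :: "'v list \<Rightarrow> bool"
    and \<rho> :: "'a list"
  assumes "vp_alphabets n Cal Ret Itn"
    and "\<forall>k<n. P k \<subseteq> lists (Sig Cal Ret Itn k) \<and> wm_vpl (Cal k) (Ret k) (Itn k) (P k)"
    and "sem_ok n Cal Ret Itn V Fc Fr Fi"
    and "\<rho> \<in> bowtie n Cal Ret Itn P"
  shows "valid_M n Cal Ret Itn V Fc Fr Fi A \<rho> B \<longleftrightarrow> valid_S n Cal Ret Itn V Fc Fr Fi A \<rho> B"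
proof -
  interpret vctx n Cal Ret Itn V Fc Fi Fr using assms(1) by unfold_locales
  have sh: "\<rho> \<in> shuffle n Cal Ret Itn P" and wnd: "well_nested n Cal Ret Itn \<rho>"
    using assms(4) unfolding bowtie_def by auto
  have wnr: "wn n Cal Ret Itn \<rho>" using wm_wn[OF bowtie_wm[OF assms(2) sh] wnd] .
  show ?thesis
  proof
    assume M: "valid_M n Cal Ret Itn V Fc Fr Fi A \<rho> B"
    have "B (last st')" if st: "(st,st') \<in> SS \<rho>" and a: "A (last st)" for st st'
    proof -
      have sc: "st \<in> sconf n V" using Ssem_dom[OF st] by blast
      then have ne: "st \<noteq> []" by (simp add: sconf_def)
      define S where "S = butlast st"
      define \<nu> where "\<nu> = last st"
      have ste: "st = S @ [\<nu>]" unfolding S_def \<nu>_def using ne by simp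
      have g: "\<nu> \<in> gval n V" using sc ne unfolding \<nu>_def sconf_def by auto
      obtain \<nu>' where s': "st' = S @ [\<nu>']" "([\<nu>],[\<nu>']) \<in> SS \<rho>" using S_strip[OF wnr] st ste by blast
      define c where "c = map (\<lambda>x. [x]) \<nu>"
      have cm: "c \<in> mconf n V" using g unfolding c_def mconf_def gval_def by auto
      have ml: "map last c = \<nu>" unfolding c_def by (induction \<nu>) auto
      obtain c' where c': "(c,c') \<in> MS \<rho>" "map last c' = \<nu>'" using M2[OF wnr s'(2) cm ml] by blast
      have "B (map last c')" using M c' a ml unfolding valid_M_def \<nu>_def by auto
      then show ?thesis using c' s' by simp
    qed
    then show "valid_S n Cal Ret Itn V Fc Fr Fi A \<rho> B" unfolding valid_S_def by auto
  next
    assume S: "valid_S n Cal Ret Itn V Fc Fr Fi A \<rho> B"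
    have "B (map last c')" if c: "(c,c') \<in> MS \<rho>" and a: "A (map last c)" for c c'
    proof -
      have "([map last c],[map last c']) \<in> SS \<rho>" using M1[OF wnr c] by blast
      then show ?thesis using S a unfolding valid_S_def by fastforce
    qed
    then show "valid_M n Cal Ret Itn V Fc Fr Fi A \<rho> B" unfolding valid_M_def by auto
  qed
qed

end
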